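(* Let $f(z)=\prod_{j=1}^\infty(1+z/b_j)$, $z\in\mathbb{C}$, where $(b_j)_{j\ge1}$ is an increasing sequence of positive numbers with $\sum_{j\ge1}1/b_j<+\infty$, and assume $f$ has order $\rho\in(0,1)$. Let $F(s)=\ln f(e^s)=\sum_{j\ge1}\ln(1+e^s/b_j)$, $s\in\mathbb{R}$. Then $$\liminf_{s\to+\infty}\frac{|F^{(k)}(s)|}{F''(s)^{k/2}}=0\quad\text{for every integer }k\ge3.$$
   Context: The order of an entire function $f$ is $\limsup_{r\to\infty}\frac{\ln\ln\max_{|z|=r}|f(z)|}{\ln r}$. $F^{(k)}$ denotes the $k$-th derivative. *)

theory Defs
  imports "HOL-Analysis.Analysis"
begin

definition max_modulus :: "(complex \<Rightarrow> complex) \<Rightarrow> real \<Rightarrow> real" where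
  "max_modulus f r = Sup ((\<lambda>z. norm (f z)) ` sphere 0 r)"

definition entire_order :: "(complex \<Rightarrow> complex) \<Rightarrow> ereal" where
  "entire_order f = Limsup at_top (\<lambda>r::real. ereal (ln (ln (max_modulus f r)) / ln r))"

end

theory Submission
  imports Defs "HOL-Computational_Algebra.Polynomial" "HOL-Real_Asymp.Real_Asymp"
begin


definition sig :: "real \<Rightarrow> real \<Rightarrow> real" where
  "sig b s = exp s / (b + exp s)"

fun Pm :: "nat \<Rightarrow> real poly" where
  "Pm 0 = [:0, 1:]"
| "Pm (Suc m) = pderiv (Pm m) * [:0, 1, -1:]"

fun T :: "real \<Rightarrow> nat \<Rightarrow> real \<Rightarrow> real" where
  "T b 0 s = ln (1 + exp s / b)"
| "T b (Suc m) s = poly (Pm m) (sig b s)"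

lemma sig_bounds:
  assumes "b > 0"
  shows "0 < sig b s" "sig b s < 1" "sig b s \<le> exp s / b"
  using assms by (auto simp: sig_def field_simps add_pos_pos)

lemma sig_deriv:
  assumes "b > 0"
  shows "(sig b has_real_derivative poly [:0, 1, -1:] (sig b s)) (at s)"
proof -
  have "b + exp s > 0" using assms by (simp add: add_pos_pos)
  have "(sig b has_real_derivative (exp s * (b + exp s) - exp s * exp s) / (b + exp s)^2) (at s)"
    unfolding sig_def using \<open>b + exp s > 0\<close>
    by (auto intro!: derivative_eq_intros simp: power2_eq_square)
  moreover have "(exp s * (b + exp s) - exp s * exp s) / (b + exp s)^2 = poly [:0, 1, -1:] (sig b s)"
    using \<open>b + exp s > 0\<close> by (simp add: sig_def field_simps power2_eq_square)
  ultimately show ?thesis by simp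
qed

lemma T_deriv:
  assumes "b > 0"
  shows "(T b n has_real_derivative T b (Suc n) s) (at s)"
proof (cases n)
  case 0
  have pos: "1 + exp s / b > 0" using assms by (simp add: add_pos_pos)
  have "((\<lambda>s. ln (1 + exp s / b)) has_real_derivative (exp s / b) / (1 + exp s / b)) (at s)"
    using assms pos by (auto intro!: derivative_eq_intros simp: field_simps)
  moreover have "(exp s / b) / (1 + exp s / b) = sig b s"
    using assms by (simp add: sig_def field_simps)
  moreover have "T b 0 = (\<lambda>s. ln (1 + exp s / b))" by (rule ext) simp
  ultimately show ?thesis using 0 by simp
next
  case (Suc m)
  have d: "((\<lambda>s. poly (Pm m) (sig b s)) has_real_derivative
          poly (pderiv (Pm m)) (sig b s) * poly [:0, 1, -1:] (sig b s)) (at s)"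
    by (rule DERIV_chain2[OF poly_DERIV sig_deriv[OF assms]])
  have e1: "T b (Suc m) = (\<lambda>s. poly (Pm m) (sig b s))" by (rule ext) simp
  have e2: "poly (pderiv (Pm m)) (sig b s) * poly [:0, 1, -1:] (sig b s) = T b (Suc n) s"
    unfolding Suc T.simps Pm.simps poly_mult ..
  show ?thesis using d unfolding Suc e1 e2 .
qed

lemma poly_bounded01: "\<exists>C. \<forall>y\<in>{0..1::real}. \<bar>poly p y\<bar> \<le> C"
proof -
  have "compact (poly p ` {0..1::real})"
    by (intro compact_continuous_image continuous_intros) auto
  then obtain C where "\<forall>x\<in>poly p ` {0..1::real}. norm x \<le> C"
    using compact_imp_bounded bounded_iff by metis
  then show ?thesis by auto
qed

lemma Pm_Suc_bound: "\<exists>C\<ge>0. \<forall>y\<in>{0..1::real}. \<bar>poly (Pm (Suc m)) y\<bar> \<le> C * (y * (1 - y))"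
proof -
  obtain C where C: "\<forall>y\<in>{0..1::real}. \<bar>poly (pderiv (Pm m)) y\<bar> \<le> C"
    using poly_bounded01 by blast
  have "\<bar>poly (Pm (Suc m)) y\<bar> \<le> max C 0 * (y * (1 - y))" if "y \<in> {0..1}" for y
  proof -
    have eq: "poly (Pm (Suc m)) y = poly (pderiv (Pm m)) y * (y * (1 - y))"
      by (simp add: algebra_simps)
    moreover have nn: "y * (1 - y) \<ge> 0" using that by auto
    ultimately have "\<bar>poly (Pm (Suc m)) y\<bar> = \<bar>poly (pderiv (Pm m)) y\<bar> * (y * (1 - y))"
      by (simp only: eq, subst abs_mult, simp only: abs_of_nonneg[OF nn])
    also have "\<dots> \<le> max C 0 * (y * (1 - y))"
    proof (rule mult_right_mono)
      have "\<bar>poly (pderiv (Pm m)) y\<bar> \<le> C" using that C by blast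
      then show "\<bar>poly (pderiv (Pm m)) y\<bar> \<le> max C 0" by linarith
    qed (use nn in auto)
    finally show ?thesis .
  qed
  then show ?thesis by (intro exI[of _ "max C 0"]) auto
qed

lemma T_bound: "\<exists>C\<ge>0. \<forall>b>0. \<forall>s. \<bar>T b n s\<bar> \<le> C * (exp s / b)"
proof (cases n)
  case 0
  have "\<bar>T b n s\<bar> \<le> 1 * (exp s / b)" if "b > 0" for b s
  proof -
    have "0 \<le> exp s / b" using that by simp
    then have "0 \<le> ln (1 + exp s / b)" "ln (1 + exp s / b) \<le> exp s / b"
      using ln_add_one_self_le_self by auto
    then show ?thesis using 0 by simp
  qed
  then show ?thesis by (intro exI[of _ 1]) auto
next
  case (Suc m)
  show ?thesis
  proof (cases m)
    case 0
    have "\<bar>T b n s\<bar> \<le> 1 * (exp s / b)" if "b > 0" for b s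
      using sig_bounds[OF that, of s] Suc 0 by simp
    then show ?thesis by (intro exI[of _ 1]) auto
  next
    case (Suc m')
    obtain C where C: "C \<ge> 0" "\<forall>y\<in>{0..1::real}. \<bar>poly (Pm (Suc m')) y\<bar> \<le> C * (y * (1 - y))"
      using Pm_Suc_bound by blast
    have "\<bar>T b n s\<bar> \<le> C * (exp s / b)" if "b > 0" for b s
    proof -
      note sb = sig_bounds[OF that, of s]
      have "\<bar>T b n s\<bar> \<le> C * (sig b s * (1 - sig b s))"
        using C sb \<open>n = Suc m\<close> Suc by simp
      also have "\<dots> \<le> C * sig b s"
        using C sb by (intro mult_left_mono) (auto simp: mult_le_cancel_left1)
      also have "\<dots> \<le> C * (exp s / b)" using C sb by (intro mult_left_mono) auto
      finally show ?thesis .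
    qed
    then show ?thesis using C by blast
  qed
qed



lemma T_summable:
  assumes bpos: "\<And>j. b j > 0" and summ: "summable (\<lambda>j. 1 / b j)"
  shows "summable (\<lambda>j. T (b j) n s)" "summable (\<lambda>j. \<bar>T (b j) n s\<bar>)"
proof -
  obtain C where C: "C \<ge> 0" "\<forall>bb>0. \<forall>x. \<bar>T bb n x\<bar> \<le> C * (exp x / bb)"
    using T_bound by blast
  have "norm (T (b j) n s) \<le> C * exp s * (1 / b j)" for j
    using C bpos[of j] by simp
  moreover have "summable (\<lambda>j. C * exp s * (1 / b j))" by (intro summable_mult summ)
  ultimately show "summable (\<lambda>j. T (b j) n s)" "summable (\<lambda>j. \<bar>T (b j) n s\<bar>)"
    by (auto intro: summable_comparison_test'[where N=0])
qed

lemma G_deriv: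
  assumes bpos: "\<And>j. b j > 0" and summ: "summable (\<lambda>j. 1 / b j)"
  shows "((\<lambda>s. \<Sum>j. T (b j) n s) has_real_derivative (\<Sum>j. T (b j) (Suc n) s)) (at s)"
proof -
  define S where "S = {..<s+1}"
  obtain C where C: "C \<ge> 0" "\<forall>bb>0. \<forall>x. \<bar>T bb (Suc n) x\<bar> \<le> C * (exp x / bb)"
    using T_bound by blast
  have unif: "uniform_limit S (\<lambda>N x. \<Sum>i<N. T (b i) (Suc n) x) (\<lambda>x. \<Sum>i. T (b i) (Suc n) x) sequentially"
  proof (rule Weierstrass_m_test[where M="\<lambda>j. C * exp (s+1) * (1 / b j)"])
    fix j x assume "x \<in> S"
    then have "exp x \<le> exp (s+1)" by (simp add: S_def)
    then have "C * (exp x / b j) \<le> C * exp (s+1) * (1 / b j)"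
      using C bpos[of j] by (simp add: divide_right_mono mult_left_mono)
    then show "norm (T (b j) (Suc n) x) \<le> C * exp (s+1) * (1 / b j)"
      using C bpos[of j] by (smt (verit) real_norm_def)
  next
    show "summable (\<lambda>j. C * exp (s+1) * (1 / b j))" by (intro summable_mult summ)
  qed
  have "\<exists>g. \<forall>x\<in>S. (\<lambda>j. T (b j) n x) sums g x \<and>
      (g has_field_derivative (\<Sum>i. T (b i) (Suc n) x)) (at x within S)"
  proof (rule has_field_derivative_series[OF _ _ unif, where ?x0.0=s])
    show "convex S" by (simp add: S_def)
    show "s \<in> S" by (simp add: S_def)
    show "summable (\<lambda>j. T (b j) n s)" by (rule T_summable[OF bpos summ])
    fix j x assume "x \<in> S"
    show "(T (b j) n has_real_derivative T (b j) (Suc n) x) (at x within S)"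
      by (rule has_field_derivative_at_within[OF T_deriv[OF bpos]])
  qed
  then obtain g where g: "\<And>x. x \<in> S \<Longrightarrow> (\<lambda>j. T (b j) n x) sums g x"
     "\<And>x. x \<in> S \<Longrightarrow> (g has_field_derivative (\<Sum>i. T (b i) (Suc n) x)) (at x within S)"
    by blast
  have "open S" "s \<in> S" by (auto simp: S_def)
  have "(g has_field_derivative (\<Sum>i. T (b i) (Suc n) s)) (at s)"
    using g(2)[OF \<open>s \<in> S\<close>] at_within_open[OF \<open>s \<in> S\<close> \<open>open S\<close>] by simp
  then show ?thesis
    by (rule has_field_derivative_transform_within_open[OF _ \<open>open S\<close> \<open>s \<in> S\<close>])
       (use g(1) sums_unique in auto)
qed

lemma deriv_iter:
  assumes bpos: "\<And>j. b j > 0" and summ: "summable (\<lambda>j. 1 / b j)"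
  shows "(deriv ^^ n) (\<lambda>s. \<Sum>j. T (b j) 0 s) = (\<lambda>s. \<Sum>j. T (b j) n s)"
proof (induction n)
  case 0
  then show ?case by simp
next
  case (Suc n)
  have "(deriv ^^ Suc n) (\<lambda>s. \<Sum>j. T (b j) 0 s) = deriv ((deriv ^^ n) (\<lambda>s. \<Sum>j. T (b j) 0 s))"
    by simp
  also have "\<dots> = deriv (\<lambda>s. \<Sum>j. T (b j) n s)" by (simp only: Suc.IH)
  also have "\<dots> = (\<lambda>s. \<Sum>j. T (b j) (Suc n) s)"
    by (rule ext, rule DERIV_imp_deriv[OF G_deriv[OF bpos summ]])
  finally show ?case .
qed

lemma Tk_le_T2:
  assumes bpos: "\<And>j. b j > 0" and summ: "summable (\<lambda>j. 1 / b j)" and k: "k \<ge> 3"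
  shows "\<exists>C\<ge>0. \<forall>s. \<bar>\<Sum>j. T (b j) k s\<bar> \<le> C * (\<Sum>j. T (b j) 2 s) \<and> 0 \<le> (\<Sum>j. T (b j) 2 s)"
proof -
  obtain m where m: "k = Suc (Suc m)" using k by (metis add_2_eq_Suc le_Suc_ex numeral_3_eq_3 le_add1 le_trans)
  obtain C where C: "C \<ge> 0" "\<forall>y\<in>{0..1::real}. \<bar>poly (Pm (Suc m)) y\<bar> \<le> C * (y * (1 - y))"
    using Pm_Suc_bound by blast
  have T2: "T bb 2 x = sig bb x * (1 - sig bb x)" for bb x
    by (simp add: numeral_2_eq_2 algebra_simps power2_eq_square pderiv_pCons)
  have pt: "\<bar>T (b j) k s\<bar> \<le> C * T (b j) 2 s" for j s
    using C sig_bounds[OF bpos[of j], of s] by (simp add: m T2)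
  have nn: "0 \<le> T (b j) 2 s" for j s
    using sig_bounds[OF bpos[of j], of s] by (simp add: T2)
  have "\<bar>\<Sum>j. T (b j) k s\<bar> \<le> C * (\<Sum>j. T (b j) 2 s)" for s
  proof -
    have "\<bar>\<Sum>j. T (b j) k s\<bar> \<le> (\<Sum>j. \<bar>T (b j) k s\<bar>)"
      by (rule summable_rabs[OF T_summable(2)[OF bpos summ]])
    also have "\<dots> \<le> (\<Sum>j. C * T (b j) 2 s)"
      by (intro suminf_le pt T_summable(2)[OF bpos summ] summable_mult T_summable(1)[OF bpos summ])
    also have "\<dots> = C * (\<Sum>j. T (b j) 2 s)"
      by (rule suminf_mult[OF T_summable(1)[OF bpos summ]])
    finally show ?thesis .
  qed
  moreover have "0 \<le> (\<Sum>j. T (b j) 2 s)" for s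
    by (intro suminf_nonneg nn T_summable(1)[OF bpos summ])
  ultimately show ?thesis using C by blast
qed



lemma prod_cp:
  fixes b :: "nat \<Rightarrow> real"
  assumes bpos: "\<And>j. b j > 0" and summ: "summable (\<lambda>j. 1 / b j)"
  shows "(\<lambda>n. \<Prod>i\<le>n. 1 + z / complex_of_real (b i)) \<longlonglongrightarrow> (\<Prod>j. 1 + z / complex_of_real (b j))"
proof -
  have "summable (\<lambda>i. norm (1 + z / complex_of_real (b i) - 1))"
  proof -
    have "norm (1 + z / complex_of_real (b i) - 1) = norm z * (1 / b i)" for i
      using bpos[of i] by (simp add: norm_divide)
    then show ?thesis using summable_mult[OF summ, of "norm z"] by simp
  qed
  then have "abs_convergent_prod (\<lambda>i. 1 + z / complex_of_real (b i))"
    by (simp add: abs_convergent_prod_conv_summable)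
  then show ?thesis by (intro convergent_prod_LIMSEQ abs_convergent_prod_imp_convergent_prod)
qed

lemma f_norm_le:
  fixes b :: "nat \<Rightarrow> real"
  assumes bpos: "\<And>j. b j > 0" and summ: "summable (\<lambda>j. 1 / b j)" and z: "z \<noteq> 0"
  shows "norm (\<Prod>j. 1 + z / complex_of_real (b j)) \<le> exp (\<Sum>j. T (b j) 0 (ln (norm z)))"
proof -
  have Tz: "T (b j) 0 (ln (norm z)) = ln (1 + norm z / b j)" for j using z by simp
  have nn: "0 \<le> ln (1 + norm z / b j)" for j using bpos[of j] by simp
  have sm: "summable (\<lambda>j. ln (1 + norm z / b j))"
    using T_summable(1)[OF bpos summ, of 0 "ln (norm z)"] Tz by simp
  have "norm (\<Prod>i\<le>n. 1 + z / complex_of_real (b i)) \<le> exp (\<Sum>j. T (b j) 0 (ln (norm z)))" for n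
  proof -
    have "norm (\<Prod>i\<le>n. 1 + z / complex_of_real (b i)) \<le> (\<Prod>i\<le>n. norm (1 + z / complex_of_real (b i)))"
      by (rule norm_prod_le)
    also have "\<dots> \<le> (\<Prod>i\<le>n. 1 + norm z / b i)"
    proof (rule prod_mono)
      fix i
      have "norm (1 + z / complex_of_real (b i)) \<le> norm (1::complex) + norm (z / complex_of_real (b i))"
        by (rule norm_triangle_ineq)
      also have "\<dots> = 1 + norm z / b i" using bpos[of i] by (simp add: norm_divide)
      finally show "0 \<le> norm (1 + z / complex_of_real (b i)) \<and> norm (1 + z / complex_of_real (b i)) \<le> 1 + norm z / b i"
        by simp
    qed
    also have "\<dots> = (\<Prod>i\<le>n. exp (ln (1 + norm z / b i)))"
    proof (rule prod.cong)
      fix i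
      have "0 < 1 + norm z / b i" using bpos[of i] by (simp add: add_pos_nonneg)
      then show "1 + norm z / b i = exp (ln (1 + norm z / b i))" by simp
    qed simp
    also have "\<dots> = exp (\<Sum>i\<le>n. ln (1 + norm z / b i))"
      by (simp add: exp_sum)
    also have "\<dots> \<le> exp (\<Sum>j. ln (1 + norm z / b j))"
      using sum_le_suminf[OF sm, of "{..n}"] nn by simp
    finally show ?thesis using Tz by simp
  qed
  then show ?thesis
    by (intro tendsto_le[OF _ tendsto_const tendsto_norm[OF prod_cp[OF bpos summ]]]) auto
qed

lemma f_real_ge:
  fixes b :: "nat \<Rightarrow> real"
  assumes bpos: "\<And>j. b j > 0" and summ: "summable (\<lambda>j. 1 / b j)" and r: "r > 0"
  shows "norm (\<Prod>j. 1 + complex_of_real r / complex_of_real (b j)) \<ge> 1 + r / b 0"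
proof -
  have "norm (\<Prod>i\<le>n. 1 + complex_of_real r / complex_of_real (b i)) \<ge> 1 + r / b 0" for n
  proof -
    have pos: "0 < 1 + r / b i" for i using bpos[of i] r by (simp add: add_pos_pos)
    have eq: "(\<Prod>i\<le>n. 1 + complex_of_real r / complex_of_real (b i)) = complex_of_real (\<Prod>i\<le>n. 1 + r / b i)"
      by simp
    have "norm (\<Prod>i\<le>n. 1 + complex_of_real r / complex_of_real (b i)) = (\<Prod>i\<le>n. 1 + r / b i)"
      by (simp only: eq norm_of_real) (rule abs_of_pos[OF prod_pos], use pos in auto)
    also have "\<dots> = exp (\<Sum>i\<le>n. ln (1 + r / b i))"
      using pos by (simp add: exp_sum)
    also have "\<dots> \<ge> exp (ln (1 + r / b 0))"
      by (subst exp_le_cancel_iff, rule member_le_sum) (use pos bpos r in \<open>auto simp: less_imp_le\<close>)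
    finally show ?thesis using pos[of 0] by simp
  qed
  then show ?thesis
    by (intro tendsto_le[OF _ tendsto_norm[OF prod_cp[OF bpos summ]] tendsto_const]) auto
qed

lemma max_modulus_bounds:
  fixes b :: "nat \<Rightarrow> real"
  assumes bpos: "\<And>j. b j > 0" and summ: "summable (\<lambda>j. 1 / b j)" and r: "r > 0"
    and f_def: "\<And>z. f z = (\<Prod>j. 1 + z / complex_of_real (b j))"
  shows "max_modulus f r \<le> exp (\<Sum>j. T (b j) 0 (ln r))" "max_modulus f r > 1"
proof -
  have ub: "norm (f z) \<le> exp (\<Sum>j. T (b j) 0 (ln r))" if "z \<in> sphere 0 r" for z
    using f_norm_le[OF bpos summ, of z] that r f_def by auto
  show "max_modulus f r \<le> exp (\<Sum>j. T (b j) 0 (ln r))"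
    unfolding max_modulus_def by (rule cSUP_least) (use ub r in auto)
  have "bdd_above ((\<lambda>z. norm (f z)) ` sphere 0 r)"
    by (rule bdd_aboveI2, rule ub)
  moreover have "complex_of_real r \<in> sphere 0 r" using r by simp
  ultimately have "norm (f (complex_of_real r)) \<le> max_modulus f r"
    unfolding max_modulus_def by (rule cSUP_upper[rotated])
  moreover have "norm (f (complex_of_real r)) \<ge> 1 + r / b 0"
    using f_real_ge[OF bpos summ r] f_def by simp
  moreover have "r / b 0 > 0" using r bpos[of 0] by simp
  ultimately show "max_modulus f r > 1" by linarith
qed

lemma ratio_small:
  fixes x y C e :: real
  assumes C: "C \<ge> 0" and e: "e > 0" and x: "x \<ge> ((C+1)/e)^2 + 1"
    and y: "\<bar>y\<bar> \<le> C * x" and k: "k \<ge> 3"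
  shows "\<bar>y\<bar> / x powr (real k / 2) < e"
proof -
  have x1: "x \<ge> 1" using x by (smt (verit) zero_le_power2)
  have "x powr (real k / 2) \<ge> x powr (3/2)"
    using x1 k by (intro powr_mono) auto
  moreover have "x powr (3/2) = x * sqrt x"
  proof -
    have "x powr (3/2) = x powr (1 + 1/2)" by simp
    also have "\<dots> = x * x powr (1/2)" using x1 by (simp only: powr_add) simp
    finally show ?thesis using x1 by (simp add: powr_half_sqrt)
  qed
  ultimately have xp: "x powr (real k / 2) \<ge> x * sqrt x" by simp
  have "sqrt (((C+1)/e)^2) < sqrt x" by (rule real_sqrt_less_mono) (use x in linarith)
  moreover have "sqrt (((C+1)/e)^2) = (C+1)/e" using C e by simp
  ultimately have sx: "sqrt x > (C+1)/e" by simp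
  have sxpos: "sqrt x > 0" using x1 by simp
  have "\<bar>y\<bar> / x powr (real k / 2) \<le> C * x / (x * sqrt x)"
    using y xp x1 sxpos by (intro frac_le) auto
  also have "\<dots> = C / sqrt x" using x1 by simp
  also have "\<dots> < e"
    using sx e sxpos C by (simp add: divide_less_eq field_simps)
  finally show ?thesis .
qed



theorem proposition4p7:
  fixes b :: "nat \<Rightarrow> real" and \<rho> :: real
    and f :: "complex \<Rightarrow> complex" and F :: "real \<Rightarrow> real"
  assumes b_pos: "\<And>j. b j > 0"
    and b_mono: "mono b"
    and b_summable: "summable (\<lambda>j. 1 / b j)"
    and f_def: "\<And>z. f z = (\<Prod>j. 1 + z / complex_of_real (b j))"
    and order: "entire_order f = ereal \<rho>"
    and rho: "0 < \<rho>" "\<rho> < 1"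
    and F_def: "\<And>s. F s = (\<Sum>j. ln (1 + exp s / b j))"
  shows "\<And>k::nat. k \<ge> 3 \<Longrightarrow>
    Liminf at_top (\<lambda>s. ereal (\<bar>(deriv ^^ k) F s\<bar> / ((deriv ^^ 2) F s) powr (real k / 2))) = 0"
proof -
  define G where "G = (\<lambda>n s. \<Sum>j. T (b j) n s)"
  have FG: "F = G 0" by (rule ext) (simp add: F_def G_def)
  have dG: "(G n has_real_derivative G (Suc n) s) (at s)" for n s
    unfolding G_def using G_deriv[OF b_pos b_summable] by simp
  have d0: "(G 0 has_real_derivative G 1 s) (at s)" for s using dG[of 0 s] by simp
  have d1: "(G 1 has_real_derivative G 2 s) (at s)" for s using dG[of 1 s] by (simp add: numeral_2_eq_2)
  have iter: "(deriv ^^ n) F = G n" for n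
    using deriv_iter[OF b_pos b_summable, of n] unfolding FG G_def by simp
  have unb: "\<exists>s\<ge>a. G 2 s \<ge> L" for a L
  proof (rule ccontr)
    assume "\<not> ?thesis"
    then have H: "\<And>s. s \<ge> a \<Longrightarrow> G 2 s < L" by (meson not_le)
    define a' where "a' = max a 1"
    define L' where "L' = max L 0"
    have a': "a' \<ge> 1" "a' \<ge> a" by (auto simp: a'_def)
    have L': "L' \<ge> 0" by (simp add: L'_def)
    have H2: "G 2 s \<le> L'" if "s \<ge> a'" for s
      using H[of s] that a' by (simp add: L'_def)
    have G1b: "G 1 s \<le> G 1 a' + L' * (s - a')" if "s \<ge> a'" for s
    proof (cases "s = a'")
      case False
      then have "a' < s" using that by simp
      from MVT2[OF this d1] obtain z where z: "a' < z" "z < s" "G 1 s - G 1 a' = (s - a') * G 2 z"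
        by blast
      have "(s - a') * G 2 z \<le> (s - a') * L'"
        using H2[of z] z by (intro mult_left_mono) auto
      then show ?thesis using z by (simp add: algebra_simps)
    qed simp
    have G0b: "G 0 s \<le> G 0 a' + (s - a') * (G 1 a' + L' * (s - a'))" if "s \<ge> a'" for s
    proof (cases "s = a'")
      case False
      then have "a' < s" using that by simp
      from MVT2[OF this d0] obtain z where z: "a' < z" "z < s" "G 0 s - G 0 a' = (s - a') * G 1 z"
        by blast
      have "G 1 z \<le> G 1 a' + L' * (z - a')" using G1b[of z] z by simp
      also have "\<dots> \<le> G 1 a' + L' * (s - a')" using z L' by (intro add_left_mono mult_left_mono) auto
      finally have "(s - a') * G 1 z \<le> (s - a') * (G 1 a' + L' * (s - a'))"
        using z by (intro mult_left_mono) auto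
      then show ?thesis using z by (simp add: algebra_simps)
    qed simp
    define K where "K = \<bar>G 0 a'\<bar> + \<bar>G 1 a'\<bar> + L' + 1"
    have Kpos: "K > 0" using L' by (simp add: K_def add_nonneg_pos)
    have Kb: "G 0 s \<le> K * s^2" if "s \<ge> a'" for s
    proof -
      have s1: "s \<ge> 1" using that a' by simp
      have ss: "s \<le> s^2" using s1 by (simp add: power2_eq_square)
      have d: "0 \<le> s - a'" "s - a' \<le> s" using that a' by auto
      have t1: "G 0 a' \<le> \<bar>G 0 a'\<bar> * s^2"
        using s1 by (smt (verit) mult_cancel_left1 mult_left_mono one_le_power abs_ge_zero)
      have "(s - a') * G 1 a' \<le> s * \<bar>G 1 a'\<bar>"
        using d by (smt (verit) abs_ge_zero mult_left_mono mult_right_mono abs_ge_self)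
      also have "\<dots> \<le> s^2 * \<bar>G 1 a'\<bar>" using ss by (intro mult_right_mono) auto
      finally have t2: "(s - a') * G 1 a' \<le> \<bar>G 1 a'\<bar> * s^2" by (simp only: mult.commute)
      have "(s - a') * (L' * (s - a')) = L' * (s - a')^2" by (simp add: power2_eq_square)
      also have "\<dots> \<le> L' * s^2" using d L' by (intro mult_left_mono power_mono) auto
      finally have t3: "(s - a') * (L' * (s - a')) \<le> L' * s^2" .
      have "G 0 s \<le> \<bar>G 0 a'\<bar> * s^2 + \<bar>G 1 a'\<bar> * s^2 + L' * s^2"
        using G0b[OF that] t1 t2 t3 by (simp add: algebra_simps)
      also have "\<dots> \<le> K * s^2" by (simp add: K_def algebra_simps)
      finally show ?thesis .
    qed
    have ev: "eventually (\<lambda>r. ereal (ln (ln (max_modulus f r)) / ln r) \<le>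
                   ereal ((ln K + 2 * ln (ln r)) / ln r)) at_top"
      using eventually_ge_at_top[of "exp a'"]
    proof eventually_elim
      case (elim r)
      have r: "r > 0" using elim by (smt (verit) exp_gt_zero)
      have lr: "ln r \<ge> a'" using elim r by (metis ln_exp ln_le_cancel_iff exp_gt_zero)
      then have lr1: "ln r \<ge> 1" using a' by simp
      note MB = max_modulus_bounds[OF b_pos b_summable r f_def]
      have "ln (max_modulus f r) \<le> ln (exp (G 0 (ln r)))"
        using MB unfolding G_def by (subst ln_le_cancel_iff) auto
      also have "\<dots> = G 0 (ln r)" by simp
      also have "\<dots> \<le> K * (ln r)^2" by (rule Kb[OF lr])
      finally have "ln (ln (max_modulus f r)) \<le> ln (K * (ln r)^2)"
        using MB(2) Kpos lr1 by (subst ln_le_cancel_iff) auto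
      also have "\<dots> = ln K + 2 * ln (ln r)"
        using Kpos lr1 by (simp add: ln_mult ln_realpow)
      finally have "ln (ln (max_modulus f r)) / ln r \<le> (ln K + 2 * ln (ln r)) / ln r"
        using lr1 by (intro divide_right_mono) auto
      then show ?case by simp
    qed
    have lim: "((\<lambda>r. (ln K + 2 * ln (ln r)) / ln r) \<longlongrightarrow> 0) at_top"
      by real_asymp
    have "Limsup at_top (\<lambda>r. ereal ((ln K + 2 * ln (ln r)) / ln r)) = 0"
      using lim_imp_Limsup[OF trivial_limit_at_top_linorder tendsto_ereal[OF lim]]
      by (simp add: zero_ereal_def)
    then have "entire_order f \<le> 0"
      unfolding entire_order_def using Limsup_mono[OF ev] by simp
    then show False using order rho by simp
  qed
  show "Liminf at_top (\<lambda>s. ereal (\<bar>(deriv ^^ k) F s\<bar> / ((deriv ^^ 2) F s) powr (real k / 2))) = 0"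
    if k: "k \<ge> 3" for k :: nat
  proof -
    obtain C where C: "C \<ge> 0" "\<And>s. \<bar>G k s\<bar> \<le> C * G 2 s" "\<And>s. 0 \<le> G 2 s"
      using Tk_le_T2[OF b_pos b_summable k] unfolding G_def by blast
    have "Liminf at_top (\<lambda>s. ereal (\<bar>G k s\<bar> / G 2 s powr (real k / 2))) = 0"
    proof (rule antisym)
      show "0 \<le> Liminf at_top (\<lambda>s. ereal (\<bar>G k s\<bar> / G 2 s powr (real k / 2)))"
        by (rule Liminf_bounded) (simp add: zero_ereal_def)
      show "Liminf at_top (\<lambda>s. ereal (\<bar>G k s\<bar> / G 2 s powr (real k / 2))) \<le> 0"
      proof (rule ereal_le_epsilon2)
        fix e :: real assume e: "e > 0"
        show "Liminf at_top (\<lambda>s. ereal (\<bar>G k s\<bar> / G 2 s powr (real k / 2))) \<le> 0 + ereal e"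
        proof (rule Liminf_least)
          fix P :: "real \<Rightarrow> bool" assume "eventually P at_top"
          then obtain N where N: "\<And>s. s \<ge> N \<Longrightarrow> P s" by (auto simp: eventually_at_top_linorder)
          obtain s where s: "s \<ge> N" "G 2 s \<ge> ((C+1)/e)^2 + 1" using unb by blast
          have "\<bar>G k s\<bar> / G 2 s powr (real k / 2) < e"
            by (rule ratio_small[OF C(1) e s(2) C(2) k])
          then have "ereal (\<bar>G k s\<bar> / G 2 s powr (real k / 2)) \<le> 0 + ereal e" by simp
          then show "(INF s\<in>Collect P. ereal (\<bar>G k s\<bar> / G 2 s powr (real k / 2))) \<le> 0 + ereal e"
            using N[OF s(1)] by (intro INF_lower2) auto
        qed
      qed
    qed
    then show ?thesis by (simp only: iter)
  qed
qed

end
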